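(* Suppose $L$ is a linear order with a first element such that $L/\!\sim_\omega\;\cong 1$ and $\operatorname{cf}(L)=\omega_1$, and suppose $L$ has a strictly increasing cofinal sequence $\langle x_\alpha:\alpha<\omega_1\rangle$ with $L=\bigcup_{\alpha<\omega_1}[x_\alpha,x_{\alpha+1})$. Then $L$ is isomorphic to a suborder of $U$.
   Context: The countable condensation $\sim_\omega$ on a linear order $L$: $x\sim_\omega y$ iff the closed interval between $x$ and $y$ is countable; $L/\!\sim_\omega\;\cong 1$ means all elements of $L$ are mutually $\sim_\omega$-equivalent. $\operatorname{cf}(L)$ is the least length of a strictly increasing cofinal sequence in $L$. $U$ is the linear order $R^*+\mathbb{Q}+R$, where $R$ is obtained from $\omega_1$ by replacing each $\alpha<\omega_1$ with a point $u_\alpha$ followed by a copy $\mathbb{Q}(\alpha)$ of the rationals (so $u_\alpha<\mathbb{Q}(\alpha)<u_{\alpha+1}$), $R^*$ is the reverse of $R$, and the middle summand is a copy of the rationals. *)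

theory Defs
  imports Main "HOL-Library.Countable_Set"
begin

text \<open>The type 'w is (an isomorphic copy of) omega_1: an uncountable well-order
  all of whose proper initial segments are countable.\<close>
definition omega1_type :: "'w::wellorder itself \<Rightarrow> bool" where
  "omega1_type _ \<longleftrightarrow> uncountable (UNIV :: 'w set) \<and> (\<forall>w::'w. countable {..<w})"

definition wsucc :: "'w::wellorder \<Rightarrow> 'w" where
  "wsucc w = (LEAST v. w < v)"

text \<open>Countable condensation is trivial: all elements mutually equivalent.\<close>
definition cc_trivial :: "'a::linorder itself \<Rightarrow> bool" where
  "cc_trivial _ \<longleftrightarrow> (\<forall>x y::'a. countable {min x y..max x y})"

definition has_first :: "'a::linorder itself \<Rightarrow> bool" where
  "has_first _ \<longleftrightarrow> (\<exists>m::'a. \<forall>x. m \<le> x)"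

definition cofinal_in :: "'a::linorder set \<Rightarrow> bool" where
  "cofinal_in S \<longleftrightarrow> (\<forall>y. \<exists>s\<in>S. y \<le> s)"

text \<open>cf(L) = omega_1 (ordinals are indexed by the omega_1 type 'w: the ordinals
  below omega_1 are the order types of the initial segments {..<w}):
  there is a strictly increasing cofinal sequence of length omega_1, and none of
  any length alpha < omega_1.\<close>
definition cf_is_omega1 :: "'w::wellorder itself \<Rightarrow> 'a::linorder itself \<Rightarrow> bool" where
  "cf_is_omega1 _ _ \<longleftrightarrow>
     (\<exists>s::'w \<Rightarrow> 'a. strict_mono s \<and> cofinal_in (range s)) \<and>
     \<not> (\<exists>(w::'w) (s::'w \<Rightarrow> 'a). strict_mono_on {..<w} s \<and> cofinal_in (s ` {..<w}))"

text \<open>The order R: omega_1 with each alpha replaced by u_alpha (= (alpha, None))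
  followed by a copy of Q (= (alpha, Some q)).\<close>
definition R_less :: "('w::wellorder \<times> rat option) \<Rightarrow> ('w \<times> rat option) \<Rightarrow> bool" where
  "R_less p q \<longleftrightarrow> fst p < fst q \<or>
     (fst p = fst q \<and> ((snd p = None \<and> snd q \<noteq> None) \<or>
        (\<exists>a b. snd p = Some a \<and> snd q = Some b \<and> a < b)))"

text \<open>U = R* + Q + R.\<close>
datatype 'w U_elt = ULeft "'w \<times> rat option" | UMid rat | URight "'w \<times> rat option"

fun U_less :: "'w::wellorder U_elt \<Rightarrow> 'w U_elt \<Rightarrow> bool" where
  "U_less (ULeft r) (ULeft r') \<longleftrightarrow> R_less r' r"
| "U_less (ULeft _) (UMid _) \<longleftrightarrow> True"
| "U_less (ULeft _) (URight _) \<longleftrightarrow> True"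
| "U_less (UMid q) (UMid q') \<longleftrightarrow> q < q'"
| "U_less (UMid _) (URight _) \<longleftrightarrow> True"
| "U_less (URight r) (URight r') \<longleftrightarrow> R_less r r'"
| "U_less _ _ \<longleftrightarrow> False"

definition embeds_in_U :: "'w::wellorder itself \<Rightarrow> 'a::linorder itself \<Rightarrow> bool" where
  "embeds_in_U _ _ \<longleftrightarrow> (\<exists>f :: 'a \<Rightarrow> 'w U_elt. \<forall>x y. x < y \<longleftrightarrow> U_less (f x) (f y))"

end

theory Submission
  imports Defs Complex_Main
begin

lemma ctbl_embed_rat:
  fixes S :: "'a::linorder set"
  assumes cS: "countable S"
  shows "\<exists>h::'a \<Rightarrow> rat. \<forall>y\<in>S. \<forall>z\<in>S. y < z \<longrightarrow> h y < h z"
proof -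
  define k where "k = to_nat_on S"
  have injk: "inj_on k S" unfolding k_def using cS by (rule inj_on_to_nat_on)
  define F where "F y = (\<lambda>n. if n \<in> k ` {z\<in>S. z<y} then (1/2::real)^n else 0)" for y
  define g where "g y = suminf (F y)" for y
  have summ: "summable (F y)" for y
    by (rule summable_comparison_test[where g="\<lambda>n. (1/2::real)^n"]) (auto simp: F_def summable_geometric)
  have key: "g y + (1/2)^(k y) \<le> g z" if yS: "y\<in>S" and zS: "z\<in>S" and yz: "y<z" for y z
  proof -
    have s: "(\<lambda>n. F y n + (if n = k y then (1/2::real)^n else 0)) sums (g y + (1/2)^(k y))"
      unfolding g_def by (intro sums_add summable_sums summ sums_single)
    have "g y + (1/2)^(k y) = suminf (\<lambda>n. F y n + (if n = k y then (1/2::real)^n else 0))"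
      using s by (simp add: sums_iff)
    also have "\<dots> \<le> suminf (F z)"
    proof (rule suminf_le)
      show "summable (\<lambda>n. F y n + (if n = k y then (1/2::real)^n else 0))" using s by (simp add: sums_iff)
      show "summable (F z)" by (rule summ)
      fix n
      show "F y n + (if n = k y then (1/2::real)^n else 0) \<le> F z n"
      proof (cases "n = k y")
        case True
        have "n \<notin> k ` {w\<in>S. w<y}"
        proof
          assume "n \<in> k ` {w\<in>S. w<y}"
          then obtain w where "w\<in>S" "w<y" "k w = k y" using True by auto
          with injk yS show False by (metis inj_on_def less_irrefl)
        qed
        moreover have "n \<in> k ` {w\<in>S. w<z}" using True yS yz by auto
        ultimately show ?thesis using True by (simp add: F_def)
      next
        case False
        have "k ` {w\<in>S. w<y} \<subseteq> k ` {w\<in>S. w<z}" using yz by auto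
        then show ?thesis using False by (auto simp: F_def)
      qed
    qed
    finally show ?thesis unfolding g_def .
  qed
  have "\<forall>y. \<exists>r. g y < of_rat r \<and> of_rat r < g y + (1/2)^(k y)"
    by (intro allI of_rat_dense) simp
  then obtain h where h: "\<And>y. g y < of_rat (h y) \<and> of_rat (h y) < g y + (1/2)^(k y)" by metis
  have "\<forall>y\<in>S. \<forall>z\<in>S. y < z \<longrightarrow> h y < h z"
  proof (intro ballI impI)
    fix y z assume "y\<in>S" "z\<in>S" "y<z"
    then have "real_of_rat (h y) < real_of_rat (h z)" using key[of y z] h[of y] h[of z] by linarith
    then show "h y < h z" by (simp add: of_rat_less)
  qed
  then show ?thesis by blast
qed

lemma R_less_irrefl: "\<not> R_less p p" by (auto simp: R_less_def)
lemma R_less_asym: "R_less p q \<Longrightarrow> \<not> R_less q p" by (auto simp: R_less_def)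

theorem proposition3p12:
  assumes "omega1_type TYPE('w::wellorder)"
    and "has_first TYPE('a::linorder)"
    and "cc_trivial TYPE('a)"
    and "cf_is_omega1 TYPE('w) TYPE('a)"
    and "\<exists>x::'w \<Rightarrow> 'a. strict_mono x \<and> cofinal_in (range x) \<and>
           (UNIV :: 'a set) = (\<Union>\<alpha>. {x \<alpha> ..< x (wsucc \<alpha>)})"
  shows "embeds_in_U TYPE('w) TYPE('a)"
proof -
  obtain x :: "'w \<Rightarrow> 'a" where smx: "strict_mono x"
    and cov: "(UNIV :: 'a set) = (\<Union>\<alpha>. {x \<alpha> ..< x (wsucc \<alpha>)})" using assms(5) by blast
  have nomax: "\<exists>v. a < v" for a :: 'w
  proof (rule ccontr)
    assume "\<not> (\<exists>v. a < v)"
    then have "(UNIV::'w set) \<subseteq> insert a {..<a}" by (auto simp: not_less_iff_gr_or_eq)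
    moreover have "countable (insert a {..<a})" using assms(1) by (simp add: omega1_type_def)
    ultimately show False using assms(1) countable_subset unfolding omega1_type_def by blast
  qed
  have sgt: "a < wsucc a" for a :: 'w
    unfolding wsucc_def using nomax[of a] by (metis LeastI)
  have sle: "a < b \<Longrightarrow> wsucc a \<le> b" for a b :: 'w
    unfolding wsucc_def by (rule Least_le)
  define S where "S a = {x a ..< x (wsucc a)}" for a
  have cS: "countable (S a)" for a
  proof -
    have "S a \<subseteq> {min (x a) (x (wsucc a)) .. max (x a) (x (wsucc a))}" by (auto simp: S_def)
    then show ?thesis using assms(3) countable_subset unfolding cc_trivial_def by blast
  qed
  have uniq: "y \<in> S a \<Longrightarrow> y \<in> S b \<Longrightarrow> a = b" for y a b
  proof (rule ccontr)
    assume "y \<in> S a" "y \<in> S b" "a \<noteq> b"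
    then consider "a < b" | "b < a" by (auto simp: neq_iff)
    then show False
    proof cases
      case 1
      then have "x (wsucc a) \<le> x b" using sle smx by (simp add: strict_mono_less_eq)
      with \<open>y \<in> S a\<close> \<open>y \<in> S b\<close> show False by (auto simp: S_def)
    next
      case 2
      then have "x (wsucc b) \<le> x a" using sle smx by (simp add: strict_mono_less_eq)
      with \<open>y \<in> S a\<close> \<open>y \<in> S b\<close> show False by (auto simp: S_def)
    qed
  qed
  have ex: "\<exists>a. y \<in> S a" for y proof - have "y \<in> (\<Union>\<alpha>. {x \<alpha> ..< x (wsucc \<alpha>)})" using cov by blast then show ?thesis unfolding S_def by blast qed
  define idx where "idx y = (SOME a. y \<in> S a)" for y
  have idx: "y \<in> S (idx y)" for y unfolding idx_def using ex[of y] by (rule someI_ex)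
  have idx_mono: "y < z \<Longrightarrow> idx y \<le> idx z" for y z
  proof (rule ccontr)
    assume "y < z" "\<not> idx y \<le> idx z"
    then have "idx z < idx y" by simp
    then have "x (wsucc (idx z)) \<le> x (idx y)" using sle smx by (simp add: strict_mono_less_eq)
    with idx[of y] idx[of z] \<open>y < z\<close> show False by (auto simp: S_def)
  qed
  have "\<forall>a. \<exists>h::'a \<Rightarrow> rat. \<forall>y\<in>S a. \<forall>z\<in>S a. y < z \<longrightarrow> h y < h z"
    using ctbl_embed_rat cS by blast
  then obtain H :: "'w \<Rightarrow> 'a \<Rightarrow> rat" where H0: "\<forall>a. \<forall>y\<in>S a. \<forall>z\<in>S a. y < z \<longrightarrow> H a y < H a z" using choice[OF \<open>\<forall>a. \<exists>h::'a \<Rightarrow> rat. \<forall>y\<in>S a. \<forall>z\<in>S a. y < z \<longrightarrow> h y < h z\<close>] by (elim exE) assumption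
  have H: "\<And>a y z. y \<in> S a \<Longrightarrow> z \<in> S a \<Longrightarrow> y < z \<Longrightarrow> H a y < H a z" using H0 by blast
  define f where "f y = URight (idx y, Some (H (idx y) y))" for y
  have fwd: "y < z \<Longrightarrow> U_less (f y) (f z)" for y z
  proof -
    assume yz: "y < z"
    show ?thesis
    proof (cases "idx y = idx z")
      case True
      then have "H (idx y) y < H (idx y) z" using H idx[of y] idx[of z] yz by metis
      then show ?thesis using True by (simp add: f_def R_less_def)
    next
      case False
      then have "idx y < idx z" using idx_mono[OF yz] by simp
      then show ?thesis by (simp add: f_def R_less_def)
    qed
  qed
  have "\<forall>y z. y < z \<longleftrightarrow> U_less (f y) (f z)"
  proof (intro allI iffI)
    fix y z
    show "y < z \<Longrightarrow> U_less (f y) (f z)" by (rule fwd)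
    assume u: "U_less (f y) (f z)"
    show "y < z"
    proof (rule ccontr)
      assume "\<not> y < z"
      then consider "y = z" | "z < y" by (auto simp: not_less_iff_gr_or_eq)
      then show False
      proof cases
        case 1 then show False using u R_less_irrefl by (simp add: f_def) blast
      next
        case 2 then show False using u fwd[OF 2] R_less_asym by (simp add: f_def) blast
      qed
    qed
  qed
  then show ?thesis unfolding embeds_in_U_def by blast
qed

end
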